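(* Suppose $g$ is polyhedral with parameter $\rho>0$, and Assumptions 1 and 2 below hold. Let $\hat{\boldsymbol\pi}$ be a probability vector on $\mathcal Z$ and $\hat r$ a reward estimate with $\max_k|\hat\pi_k-\pi_k|\le\delta_z\le\epsilon_z$ and $\max_{n,k,\mathbf b}|\hat r_n(\mathbf z_k,\mathbf b)-r_n(\mathbf z_k,\mu_n(\mathbf z_k,\mathbf b))|\le\delta_r\le\epsilon_r$. Let $\boldsymbol\alpha^*$ minimize $g$, $\tilde{\boldsymbol\alpha}^*$ minimize $\tilde g$, and $\hat{\boldsymbol\alpha}^*$ minimize $\hat g^{\hat\pi}$ (each over $\boldsymbol\alpha^d\succeq 0$, $\boldsymbol\alpha^q\in\mathbb R^N$, $\boldsymbol\alpha^h\in\mathbb R^M$). Then there is a constant $\eta\in(0,\eta_0]$ depending only on the system parameters (not on $V$, $\hat\pi$, $\hat r$) such that $$\|\hat{\boldsymbol\alpha}^*-\tilde{\boldsymbol\alpha}^*\|\le\frac{2\delta_z V f_{\max}\vartheta}{\rho},\qquad \|\boldsymbol\alpha^*-\tilde{\boldsymbol\alpha}^*\|\le\frac{2Vf_{\max}\delta_r}{\rho\eta},$$ where $f_{\max}=N\beta r_{\max}+c_{\max}$ and $\vartheta=|\mathcal Z|(1+r_{\max}+A_{\max}+\mu_{\max}+Nb_{\max}+h_{\max})/\eta$.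
   Context: System data. A finite state set $\mathcal Z=\{\mathbf z_1,\dots,\mathbf z_K\}$ with true probabilities $\pi_k$; each $\mathbf z_k$ specifies task arrivals $\mathbf A^k\in[0,A_{\max}]^N$ and resource arrivals $\mathbf e^k\in[0,h_{\max}]^M$. For each $k$, $\mathcal B_k$ is a finite set of nonnegative $M\times N$ matrices $\mathbf b=(b_{mn})$, $b_{\max}$ the largest entry over all $\mathcal B_k$. Service functions $\mu_n(\mathbf z,\mathbf b)\in[0,\mu_{\max}]$, cost $c(\mathbf z,\mathbf b)\in[0,c_{\max}]$, true mean-reward functions $r_n(\mathbf z,\mu)\in[0,r_{\max}]$; utilities $U_n$ increasing concave with $U_n(0)=0$ and $\beta=\max_{n,r}U_n'(r)<\infty$. Parameter $V\ge1$. Write $\boldsymbol\alpha=(\boldsymbol\alpha^d,\boldsymbol\alpha^q,\boldsymbol\alpha^h)\in\mathbb R^N_{\ge0}\times\mathbb R^N\times\mathbb R^M$. Dual functions. For a reward table $\rho_n(\mathbf z_k,\mathbf b)$ (either the true $r_n(\mathbf z_k,\mu_n(\mathbf z_k,\mathbf b))$ or an estimate $\hat r_n(\mathbf z_k,\mathbf b)$), define $g_k(\boldsymbol\alpha)=\sup\{V[\sum_nU_n(\gamma_n)-c(\mathbf z_k,\mathbf b)]-\sum_n\alpha^d_n[\rho_n(\mathbf z_k,\mathbf b)-\gamma_n]-\sum_n\alpha^q_n[R_n-\mu_n(\mathbf z_k,\mathbf b)]-\sum_m\alpha^h_m[\sum_n b_{mn}-h_m]\}$, the sup over $\boldsymbol\gamma\in[0,r_{\max}]^N$,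 $\mathbf 0\preceq\mathbf R\preceq\mathbf A^k$, $\mathbf b\in\mathcal B_k$, $\mathbf 0\preceq\mathbf h\preceq\mathbf e^k$. Then $g=\sum_k\pi_kg_k$ with true rewards; $\tilde g=\sum_k\pi_k g_k$ with estimated rewards $\hat r$; $\hat g^{\hat\pi}=\sum_k\hat\pi_kg_k$ with estimated rewards $\hat r$ and estimated distribution $\hat\pi$. Polyhedral: a dual function $g$ with minimizer $\boldsymbol\alpha^*$ is polyhedral with parameter $\rho>0$ if $g(\boldsymbol\alpha^* )\le g(\boldsymbol\alpha)-\rho\|\boldsymbol\alpha^*-\boldsymbol\alpha\|$ for all feasible $\boldsymbol\alpha$ (Euclidean norm). Assumption 1: there exist constants $\epsilon_r,\epsilon_z,\eta_0>0$ such that for every probability vector $\hat\pi$ and estimate $\hat r$ with $\|\hat\pi-\pi\|\le\epsilon_z$ and $\|\hat r-r\|\le\epsilon_r$ there exist $\boldsymbol\gamma\in[0,r_{\max}]^N$ and, for each $k$, actions $(\mathbf R^k_i,\mathbf b^k_i,\mathbf h^k_i)_{i\ge1}$ with $\mathbf 0\preceq\mathbf R^k_i\preceq\mathbf A^k$, $\mathbf b^k_i\in\mathcal B_k$, $\mathbf 0\preceq\mathbf h^k_i\preceq\mathbf e^k$ and weights $\lambda^k_i\ge0$, $\sum_i\lambda^k_i=1$, such that for all $n,m$: $\gamma_n-\sum_k\hat\pi_k\sum_i\lambda^k_i\hat r_n(\mathbf z_k,\mathbf b^k_i)\le-\eta_0$; $\sum_k\hat\pi_k\sum_i\lambda^k_iR^k_{in}=\sum_k\hat\pi_k\sum_i\lambda^k_i\mu_n(\mathbf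 z_k,\mathbf b^k_i)$; $\sum_k\hat\pi_k\sum_i\lambda^k_i\sum_nb^k_{imn}=\sum_k\hat\pi_k\sum_i\lambda^k_ih^k_{im}$; and $0<\sum_k\hat\pi_k\sum_i\lambda^k_iR^k_{in}<\sum_k\hat\pi_kA^k_n$, $0<\sum_k\hat\pi_k\sum_i\lambda^k_ih^k_{im}<\sum_k\hat\pi_ke^k_m$. Assumption 2: for every such $\hat\pi,\hat r$ (within $\epsilon_z,\epsilon_r$), if $g$ is polyhedral with parameter $\rho$ then $\hat g^{\hat\pi}$ is polyhedral with parameter $\rho$ (this includes $\hat\pi=\pi$, i.e. $\tilde g$). *)

theory Defs
  imports "HOL-Analysis.Analysis"
begin

text \<open>The state space Z is a finite type 'k (z_k indexed by k), tasks are
indexed by a finite type 'n (so N = CARD('n)), resources by a finite type 'm (M = CARD('m)).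
An allocation b is an M x N matrix, b $ m $ n = b_{mn}.  A dual variable
alpha = (alpha^d, alpha^q, alpha^h) lives in real^'n x real^'n x real^'m, whose norm is the
Euclidean norm.\<close>

type_synonym ('n,'m) alloc = "real^'n^'m"
type_synonym ('n,'m) dualvar = "(real^'n) \<times> (real^'n) \<times> (real^'m)"

definition prob_vec :: "('k::finite \<Rightarrow> real) \<Rightarrow> bool" where
  "prob_vec p \<longleftrightarrow> (\<forall>k. 0 \<le> p k) \<and> (\<Sum>k\<in>UNIV. p k) = 1"

definition gk :: "real \<Rightarrow> ('n::finite \<Rightarrow> real \<Rightarrow> real) \<Rightarrow> real
    \<Rightarrow> (('n,'m::finite) alloc \<Rightarrow> real) \<Rightarrow> (('n,'m) alloc \<Rightarrow> 'n \<Rightarrow> real)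
    \<Rightarrow> (('n,'m) alloc \<Rightarrow> 'n \<Rightarrow> real) \<Rightarrow> real^'n \<Rightarrow> real^'m \<Rightarrow> ('n,'m) alloc set
    \<Rightarrow> ('n,'m) dualvar \<Rightarrow> real" where
  "gk V U rmax c rho mu Ak ek Bk \<alpha> = (case \<alpha> of (ad, aq, ah) \<Rightarrow>
     Sup { V * ((\<Sum>n\<in>UNIV. U n (\<gamma>$n)) - c b)
           - (\<Sum>n\<in>UNIV. ad$n * (rho b n - \<gamma>$n))
           - (\<Sum>n\<in>UNIV. aq$n * (R$n - mu b n))
           - (\<Sum>m\<in>UNIV. ah$m * ((\<Sum>n\<in>UNIV. b$m$n) - h$m))
         | \<gamma> R b h. (\<forall>n. 0 \<le> \<gamma>$n \<and> \<gamma>$n \<le> rmax) \<and> (\<forall>n. 0 \<le> R$n \<and> R$n \<le> Ak$n)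
                 \<and> b \<in> Bk \<and> (\<forall>m. 0 \<le> h$m \<and> h$m \<le> ek$m) })"

definition dual_fun :: "real \<Rightarrow> ('n::finite \<Rightarrow> real \<Rightarrow> real) \<Rightarrow> real
    \<Rightarrow> ('k::finite \<Rightarrow> ('n,'m::finite) alloc \<Rightarrow> real) \<Rightarrow> ('k \<Rightarrow> ('n,'m) alloc \<Rightarrow> 'n \<Rightarrow> real)
    \<Rightarrow> ('k \<Rightarrow> ('n,'m) alloc \<Rightarrow> 'n \<Rightarrow> real) \<Rightarrow> ('k \<Rightarrow> real^'n) \<Rightarrow> ('k \<Rightarrow> real^'m)
    \<Rightarrow> ('k \<Rightarrow> ('n,'m) alloc set) \<Rightarrow> ('k \<Rightarrow> real) \<Rightarrow> ('n,'m) dualvar \<Rightarrow> real" where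
  "dual_fun V U rmax c rho mu A e B p \<alpha> =
     (\<Sum>k\<in>UNIV. p k * gk V U rmax (c k) (rho k) (mu k) (A k) (e k) (B k) \<alpha>)"

definition true_table :: "('k \<Rightarrow> 'n \<Rightarrow> real \<Rightarrow> real) \<Rightarrow> ('k \<Rightarrow> ('n,'m) alloc \<Rightarrow> 'n \<Rightarrow> real)
    \<Rightarrow> 'k \<Rightarrow> ('n,'m) alloc \<Rightarrow> 'n \<Rightarrow> real" where
  "true_table r mu k b n = r k n (mu k b n)"

definition dual_feasible :: "('n::finite,'m::finite) dualvar set" where
  "dual_feasible = {(ad, aq, ah). \<forall>n. 0 \<le> ad$n}"

definition is_dual_min :: "(('n::finite,'m::finite) dualvar \<Rightarrow> real) \<Rightarrow> ('n,'m) dualvar \<Rightarrow> bool" where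
  "is_dual_min G a \<longleftrightarrow> a \<in> dual_feasible \<and> (\<forall>a'\<in>dual_feasible. G a \<le> G a')"

definition polyhedral :: "(('n::finite,'m::finite) dualvar \<Rightarrow> real) \<Rightarrow> real \<Rightarrow> bool" where
  "polyhedral G \<rho> \<longleftrightarrow> 0 < \<rho> \<and>
     (\<exists>a\<in>dual_feasible. is_dual_min G a \<and> (\<forall>a'\<in>dual_feasible. G a \<le> G a' - \<rho> * norm (a - a')))"

definition close_est :: "('k::finite \<Rightarrow> real) \<Rightarrow> ('k \<Rightarrow> 'n \<Rightarrow> real \<Rightarrow> real)
    \<Rightarrow> ('k \<Rightarrow> ('n,'m) alloc \<Rightarrow> 'n \<Rightarrow> real) \<Rightarrow> ('k \<Rightarrow> ('n,'m) alloc set)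
    \<Rightarrow> real \<Rightarrow> real \<Rightarrow> ('k \<Rightarrow> real) \<Rightarrow> ('k \<Rightarrow> ('n,'m) alloc \<Rightarrow> 'n \<Rightarrow> real) \<Rightarrow> bool" where
  "close_est \<pi> r mu B dz dr pih rh \<longleftrightarrow>
     (\<forall>k. \<bar>pih k - \<pi> k\<bar> \<le> dz) \<and>
     (\<forall>k. \<forall>b\<in>B k. \<forall>n. \<bar>rh k b n - r k n (mu k b n)\<bar> \<le> dr)"

text \<open>Assumption 1 (Slater-type condition), with finite convex combinations of actions.\<close>
definition assumption1 :: "('k::finite \<Rightarrow> real) \<Rightarrow> ('k \<Rightarrow> real^'n::finite) \<Rightarrow> ('k \<Rightarrow> real^'m::finite)
    \<Rightarrow> ('k \<Rightarrow> ('n,'m) alloc set) \<Rightarrow> ('k \<Rightarrow> ('n,'m) alloc \<Rightarrow> 'n \<Rightarrow> real)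
    \<Rightarrow> ('k \<Rightarrow> 'n \<Rightarrow> real \<Rightarrow> real) \<Rightarrow> real \<Rightarrow> real \<Rightarrow> real \<Rightarrow> real \<Rightarrow> bool" where
  "assumption1 \<pi> A e B mu r rmax \<epsilon>z \<epsilon>r \<eta>0 \<longleftrightarrow> 0 < \<epsilon>z \<and> 0 < \<epsilon>r \<and> 0 < \<eta>0 \<and>
    (\<forall>pih rh. prob_vec pih \<and> close_est \<pi> r mu B \<epsilon>z \<epsilon>r pih rh \<longrightarrow>
      (\<exists>(\<gamma>::real^'n) (L::'k \<Rightarrow> nat) (Rs::'k \<Rightarrow> nat \<Rightarrow> real^'n) (bs::'k \<Rightarrow> nat \<Rightarrow> ('n,'m) alloc)
          (hs::'k \<Rightarrow> nat \<Rightarrow> real^'m) (lam::'k \<Rightarrow> nat \<Rightarrow> real).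
        (\<forall>n. 0 \<le> \<gamma>$n \<and> \<gamma>$n \<le> rmax) \<and>
        (\<forall>k. \<forall>i<L k. (\<forall>n. 0 \<le> Rs k i $ n \<and> Rs k i $ n \<le> A k $ n) \<and> bs k i \<in> B k \<and>
                     (\<forall>m. 0 \<le> hs k i $ m \<and> hs k i $ m \<le> e k $ m) \<and> 0 \<le> lam k i) \<and>
        (\<forall>k. (\<Sum>i<L k. lam k i) = 1) \<and>
        (\<forall>n. \<gamma>$n - (\<Sum>k\<in>UNIV. pih k * (\<Sum>i<L k. lam k i * rh k (bs k i) n)) \<le> - \<eta>0) \<and>
        (\<forall>n. (\<Sum>k\<in>UNIV. pih k * (\<Sum>i<L k. lam k i * Rs k i $ n))
             = (\<Sum>k\<in>UNIV. pih k * (\<Sum>i<L k. lam k i * mu k (bs k i) n))) \<and>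
        (\<forall>m. (\<Sum>k\<in>UNIV. pih k * (\<Sum>i<L k. lam k i * (\<Sum>n\<in>UNIV. bs k i $ m $ n)))
             = (\<Sum>k\<in>UNIV. pih k * (\<Sum>i<L k. lam k i * hs k i $ m))) \<and>
        (\<forall>n. 0 < (\<Sum>k\<in>UNIV. pih k * (\<Sum>i<L k. lam k i * Rs k i $ n)) \<and>
             (\<Sum>k\<in>UNIV. pih k * (\<Sum>i<L k. lam k i * Rs k i $ n)) < (\<Sum>k\<in>UNIV. pih k * A k $ n)) \<and>
        (\<forall>m. 0 < (\<Sum>k\<in>UNIV. pih k * (\<Sum>i<L k. lam k i * hs k i $ m)) \<and>
             (\<Sum>k\<in>UNIV. pih k * (\<Sum>i<L k. lam k i * hs k i $ m)) < (\<Sum>k\<in>UNIV. pih k * e k $ m))))"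

end

theory Submission
  imports Defs
begin

lemma concave_deriv0_bound:
  fixes f :: "real \<Rightarrow> real"
  assumes conc: "concave_on {0..} f" and d: "(f has_real_derivative D) (at 0 within {0..})" and x: "0 < x"
  shows "f x - f 0 \<le> D * x"
proof -
  have cv: "convex_on {0..} (\<lambda>y. - f y)" using conc by (simp add: concave_on_def)
  have "((\<lambda>y. (f y - f 0) / (y - 0)) \<longlongrightarrow> D) (at 0 within {0..})" using d by (simp add: has_field_derivative_iff)
  hence t: "((\<lambda>y. (f y - f 0) / (y - 0)) \<longlongrightarrow> D) (at_right 0)" by (rule tendsto_within_subset) auto
  have ev: "eventually (\<lambda>y. (f x - f 0)/x \<le> (f y - f 0)/(y - 0)) (at_right 0)"
    unfolding eventually_at_right_field
  proof (intro exI[of _ x] conjI allI impI)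
    fix y :: real assume y: "0 < y" "y < x"
    from convex_on_slope_le(1)[OF cv, of 0 x y] y
    have "(- f 0 - - f y) / (0 - y) \<le> (- f 0 - - f x)/(0 - x)" by auto
    then show "(f x - f 0)/x \<le> (f y - f 0)/(y - 0)" using y by (simp add: divide_simps) argo
  qed (use x in auto)
  have "(f x - f 0)/x \<le> D" by (rule tendsto_lowerbound[OF t ev]) simp
  thus ?thesis using x by (simp add: divide_le_eq mult.commute)
qed

lemma concave_deriv_le_slope:
  fixes f :: "real \<Rightarrow> real"
  assumes conc: "concave_on {0..} f" and d: "(f has_real_derivative D) (at x within {0..})" and x: "0 < x"
  shows "D * x \<le> f x - f 0"
proof -
  have cv: "convex_on {0..} (\<lambda>y. - f y)" using conc by (simp add: concave_on_def)
  have e: "at x within {0..} = at x" by (rule at_within_open_subset[where S="{0<..}"]) (use x in auto)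
  have "((\<lambda>y. (f y - f x) / (y - x)) \<longlongrightarrow> D) (at x)" using d e by (simp add: has_field_derivative_iff)
  hence t: "((\<lambda>y. (f y - f x) / (y - x)) \<longlongrightarrow> D) (at_left x)" by (rule tendsto_within_subset) auto
  have ev: "eventually (\<lambda>y. (f y - f x)/(y - x) \<le> (f x - f 0)/x) (at_left x)"
    unfolding eventually_at_left_field
  proof (intro exI[of _ 0] conjI allI impI)
    fix y :: real assume y: "0 < y" "y < x"
    from convex_on_slope_le(2)[OF cv, of 0 x y] y
    have "(- f 0 - - f x)/(0 - x) \<le> (- f y - - f x) / (y - x)" by auto
    then show "(f y - f x)/(y - x) \<le> (f x - f 0)/x" using y by (simp add: divide_simps) argo
  qed (use x in auto)
  have "D \<le> (f x - f 0)/x" by (rule tendsto_upperbound[OF t ev]) simp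
  thus ?thesis using x by (simp add: le_divide_eq mult.commute)
qed


definition vl :: "real \<Rightarrow> ('n::finite \<Rightarrow> real \<Rightarrow> real) \<Rightarrow> (('n,'m::finite) alloc \<Rightarrow> real)
   \<Rightarrow> (('n,'m) alloc \<Rightarrow> 'n \<Rightarrow> real) \<Rightarrow> (('n,'m) alloc \<Rightarrow> 'n \<Rightarrow> real) \<Rightarrow> ('n,'m) dualvar
   \<Rightarrow> ((real^'n) \<times> (real^'n) \<times> (('n,'m) alloc) \<times> (real^'m)) \<Rightarrow> real" where
"vl V U c rho mu \<alpha> x = (case x of (\<gamma>,R,b,h) \<Rightarrow> case \<alpha> of (ad,aq,ah) \<Rightarrow>
     V * ((\<Sum>n\<in>UNIV. U n (\<gamma>$n)) - c b)
           - (\<Sum>n\<in>UNIV. ad$n * (rho b n - \<gamma>$n))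
           - (\<Sum>n\<in>UNIV. aq$n * (R$n - mu b n))
           - (\<Sum>m\<in>UNIV. ah$m * ((\<Sum>n\<in>UNIV. b$m$n) - h$m)))"

definition Xs :: "real \<Rightarrow> real^'n::finite \<Rightarrow> real^'m::finite \<Rightarrow> ('n,'m) alloc set
   \<Rightarrow> ((real^'n) \<times> (real^'n) \<times> (('n,'m) alloc) \<times> (real^'m)) set" where
"Xs rmax Ak ek Bk = {(\<gamma>,R,b,h). (\<forall>n. 0 \<le> \<gamma>$n \<and> \<gamma>$n \<le> rmax) \<and> (\<forall>n. 0 \<le> R$n \<and> R$n \<le> Ak$n)
                 \<and> b \<in> Bk \<and> (\<forall>m. 0 \<le> h$m \<and> h$m \<le> ek$m)}"

lemma gk_alt: "gk V U rmax c rho mu Ak ek Bk \<alpha> = Sup (vl V U c rho mu \<alpha> ` Xs rmax Ak ek Bk)"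
proof -
  obtain ad aq ah where a: "\<alpha> = (ad,aq,ah)" by (cases \<alpha>) auto
  show ?thesis unfolding gk_def vl_def Xs_def a
    by (simp only: prod.case, rule arg_cong[where f=Sup], auto simp: image_def)
qed

lemma sum_abs_mult_bd:
  fixes a t :: "'a \<Rightarrow> real"
  assumes "\<And>i. i \<in> A \<Longrightarrow> \<bar>t i\<bar> \<le> C"
  shows "\<bar>\<Sum>i\<in>A. a i * t i\<bar> \<le> (\<Sum>i\<in>A. \<bar>a i\<bar>) * C"
proof -
  have "\<bar>\<Sum>i\<in>A. a i * t i\<bar> \<le> (\<Sum>i\<in>A. \<bar>a i * t i\<bar>)" by (rule sum_abs)
  also have "\<dots> \<le> (\<Sum>i\<in>A. \<bar>a i\<bar> * C)"
    by (rule sum_mono) (simp add: abs_mult assms mult_left_mono)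
  also have "\<dots> = (\<Sum>i\<in>A. \<bar>a i\<bar>) * C" by (simp add: sum_distrib_right)
  finally show ?thesis .
qed

lemma sum_abs_comp_le: "(\<Sum>n\<in>UNIV. \<bar>(v::real^'n::finite)$n\<bar>) \<le> real CARD('n) * norm v"
  using sum_bounded_above[of UNIV "\<lambda>n. \<bar>v$n\<bar>" "norm v"] component_le_norm_cart by auto

lemma norm_comp1: "norm (ad::real^'n::finite) \<le> norm ((ad, aq, ah) :: ('n,'m::finite) dualvar)"
  by (rule norm_fst_le)
lemma norm_comp2: "norm (aq::real^'n::finite) \<le> norm ((ad, aq, ah) :: ('n,'m::finite) dualvar)"
  by (metis norm_fst_le norm_snd_le order_trans)
lemma norm_comp3: "norm (ah::real^'m::finite) \<le> norm ((ad, aq, ah) :: ('n::finite,'m) dualvar)"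
  by (metis norm_snd_le order_trans)

lemma vl_abs_bd:
  assumes x: "x \<in> Xs rmax Ak ek Bk" and V: "0 \<le> V"
    and hU: "\<And>\<gamma>. (\<forall>n. 0 \<le> \<gamma>$n \<and> \<gamma>$n \<le> rmax) \<Longrightarrow> \<bar>\<Sum>n\<in>UNIV. U n (\<gamma>$n)\<bar> \<le> CU"
    and hc: "\<And>b. b \<in> Bk \<Longrightarrow> \<bar>c b\<bar> \<le> Cc"
    and hd: "\<And>b n g. b \<in> Bk \<Longrightarrow> 0 \<le> g \<Longrightarrow> g \<le> rmax \<Longrightarrow> \<bar>rho b n - g\<bar> \<le> Cd"
    and hq: "\<And>b n R. b \<in> Bk \<Longrightarrow> 0 \<le> R \<Longrightarrow> R \<le> Ak$n \<Longrightarrow> \<bar>R - mu b n\<bar> \<le> Cq"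
    and hh: "\<And>b m h. b \<in> Bk \<Longrightarrow> 0 \<le> h \<Longrightarrow> h \<le> ek$m \<Longrightarrow> \<bar>(\<Sum>n\<in>UNIV. b$m$n) - h\<bar> \<le> Ch"
  shows "\<bar>vl V U c rho mu (ad,aq,ah) x\<bar> \<le> V*(CU+Cc) + (\<Sum>n\<in>UNIV. \<bar>ad$n\<bar>)*Cd
            + (\<Sum>n\<in>UNIV. \<bar>aq$n\<bar>)*Cq + (\<Sum>m\<in>UNIV. \<bar>ah$m\<bar>)*Ch"
proof -
  obtain \<gamma> R b h where xe: "x = (\<gamma>,R,b,h)" by (cases x) auto
  from x have g: "\<forall>n. 0 \<le> \<gamma>$n \<and> \<gamma>$n \<le> rmax" and Rb: "\<forall>n. 0 \<le> R$n \<and> R$n \<le> Ak$n"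
    and b: "b \<in> Bk" and hb: "\<forall>m. 0 \<le> h$m \<and> h$m \<le> ek$m" by (auto simp: Xs_def xe)
  have t1: "\<bar>V * ((\<Sum>n\<in>UNIV. U n (\<gamma>$n)) - c b)\<bar> \<le> V*(CU+Cc)"
  proof -
    have "\<bar>(\<Sum>n\<in>UNIV. U n (\<gamma>$n)) - c b\<bar> \<le> CU + Cc" using hU[OF g] hc[OF b] by linarith
    thus ?thesis using V by (simp add: abs_mult mult_left_mono)
  qed
  have t2: "\<bar>\<Sum>n\<in>UNIV. ad$n * (rho b n - \<gamma>$n)\<bar> \<le> (\<Sum>n\<in>UNIV. \<bar>ad$n\<bar>)*Cd"
    by (rule sum_abs_mult_bd) (use hd b g in auto)
  have t3: "\<bar>\<Sum>n\<in>UNIV. aq$n * (R$n - mu b n)\<bar> \<le> (\<Sum>n\<in>UNIV. \<bar>aq$n\<bar>)*Cq"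
    by (rule sum_abs_mult_bd) (use hq b Rb in auto)
  have t4: "\<bar>\<Sum>m\<in>UNIV. ah$m * ((\<Sum>n\<in>UNIV. b$m$n) - h$m)\<bar> \<le> (\<Sum>m\<in>UNIV. \<bar>ah$m\<bar>)*Ch"
    by (rule sum_abs_mult_bd) (use hh b hb in auto)
  show ?thesis unfolding vl_def xe using t1 t2 t3 t4 by (simp; linarith?)
qed

lemma sup_upper': "bdd_above (f ` X) \<Longrightarrow> x \<in> X \<Longrightarrow> (f x::real) \<le> Sup (f ` X)"
  by (rule cSup_upper) auto

lemma sup_least': "X \<noteq> {} \<Longrightarrow> (\<And>x. x \<in> X \<Longrightarrow> (f x::real) \<le> K) \<Longrightarrow> Sup (f ` X) \<le> K"
  by (rule cSup_least) auto

lemma sup_abs_bd: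
  assumes "X \<noteq> {}" "\<And>x. x \<in> X \<Longrightarrow> \<bar>f x::real\<bar> \<le> K"
  shows "\<bar>Sup (f ` X)\<bar> \<le> K" "bdd_above (f ` X)"
proof -
  show bd: "bdd_above (f ` X)" using assms(2) by (auto intro!: bdd_aboveI2[where M=K] dest: abs_le_D1)
  obtain x where x: "x \<in> X" using assms(1) by auto
  have "Sup (f ` X) \<le> K" by (rule sup_least') (use assms abs_le_D1 in auto)
  moreover have "f x \<le> Sup (f ` X)" by (rule sup_upper'[OF bd x])
  moreover have "- K \<le> f x" using assms(2)[OF x] by linarith
  ultimately show "\<bar>Sup (f ` X)\<bar> \<le> K" by linarith
qed

lemma sup_shift:
  assumes "X \<noteq> {}" "bdd_above (g ` X)" "\<And>x. x \<in> X \<Longrightarrow> (f x::real) \<le> g x + d"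
  shows "Sup (f ` X) \<le> Sup (g ` X) + d"
proof (rule sup_least'[OF assms(1)])
  fix x assume x: "x \<in> X"
  have "g x \<le> Sup (g ` X)" by (rule sup_upper'[OF assms(2) x])
  thus "f x \<le> Sup (g ` X) + d" using assms(3)[OF x] by linarith
qed

lemma sup_scale:
  assumes "X \<noteq> {}" "bdd_above (f ` X)" "0 < (V::real)"
  shows "Sup ((\<lambda>x. V * f x) ` X) = V * Sup (f ` X)"
proof (rule antisym)
  show "Sup ((\<lambda>x. V * f x) ` X) \<le> V * Sup (f ` X)"
  proof (rule sup_least'[OF assms(1)])
    fix x assume "x \<in> X" hence "f x \<le> Sup (f ` X)" by (rule sup_upper'[OF assms(2)])
    thus "V * f x \<le> V * Sup (f ` X)" using assms(3) by simp
  qed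
  have bd2: "bdd_above ((\<lambda>x. V * f x) ` X)"
  proof -
    obtain K where "\<forall>x\<in>X. f x \<le> K" using assms(2) by (auto simp: bdd_above_def)
    thus ?thesis using assms(3) by (auto intro!: bdd_aboveI2[where M="V*K"] mult_left_mono)
  qed
  have "Sup (f ` X) \<le> Sup ((\<lambda>x. V * f x) ` X) / V"
  proof (rule sup_least'[OF assms(1)])
    fix x assume "x \<in> X"
    hence "V * f x \<le> Sup ((\<lambda>x. V * f x) ` X)" using sup_upper'[OF bd2, of x] by auto
    thus "f x \<le> Sup ((\<lambda>x. V * f x) ` X) / V" using assms(3) by (simp add: le_divide_eq mult.commute)
  qed
  thus "V * Sup (f ` X) \<le> Sup ((\<lambda>x. V * f x) ` X)" using assms(3) by (simp add: le_divide_eq mult.commute)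
qed

lemma vl_double:
  "vl V U c rho mu (2 *\<^sub>R \<alpha>) x = 2 * vl V U c rho mu \<alpha> x - V * ((\<Sum>n\<in>UNIV. U n (fst x $ n)) - c (fst (snd (snd x))))"
proof -
  obtain \<gamma> R b h where xe: "x = (\<gamma>,R,b,h)" by (cases x) auto
  obtain ad aq ah where a: "\<alpha> = (ad,aq,ah)" by (cases \<alpha>) auto
  show ?thesis unfolding xe a vl_def
    by (simp add: sum_distrib_left algebra_simps)
qed

lemma vl_scale:
  assumes "0 < V"
  shows "vl V U c rho mu \<alpha> x = V * vl 1 U c rho mu ((1/V) *\<^sub>R \<alpha>) x"
proof -
  obtain \<gamma> R b h where xe: "x = (\<gamma>,R,b,h)" by (cases x) auto
  obtain ad aq ah where a: "\<alpha> = (ad,aq,ah)" by (cases \<alpha>) auto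
  show ?thesis unfolding xe a vl_def using assms
    by (simp add: sum_distrib_left algebra_simps)
qed

lemma vl_pert:
  "vl V U c rho1 mu (ad,aq,ah) x - vl V U c rho2 mu (ad,aq,ah) x
     = (\<Sum>n\<in>UNIV. ad$n * (rho2 (fst (snd (snd x))) n - rho1 (fst (snd (snd x))) n))"
proof -
  obtain \<gamma> R b h where xe: "x = (\<gamma>,R,b,h)" by (cases x) auto
  show ?thesis unfolding xe vl_def
    by (simp add: sum_subtractf[symmetric] algebra_simps)
qed

lemma sum_axis_mult: "(\<Sum>n\<in>UNIV. (axis n0 (1::real)) $ n * t n) = t n0"
proof -
  have "(\<Sum>n\<in>UNIV. (axis n0 (1::real)) $ n * t n) = (\<Sum>n\<in>UNIV. if n = n0 then t n else 0)"
    by (rule sum.cong) (auto simp: axis_def)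
  thus ?thesis by simp
qed

lemma vl_shift:
  "vl V U c rho mu ((ad,aq,ah) + (axis n0 1, 0, 0)) x
     = vl V U c rho mu (ad,aq,ah) x - (rho (fst (snd (snd x))) n0 - fst x $ n0)"
proof -
  obtain \<gamma> R b h where xe: "x = (\<gamma>,R,b,h)" by (cases x) auto
  have "(\<Sum>n\<in>UNIV. (ad + axis n0 1)$n * (rho b n - \<gamma>$n)) = (\<Sum>n\<in>UNIV. ad$n * (rho b n - \<gamma>$n)) + (rho b n0 - \<gamma>$n0)"
    by (simp only: vector_add_component distrib_right sum.distrib sum_axis_mult)
  thus ?thesis unfolding xe vl_def by simp
qed


lemma poly_unique:
  assumes p: "polyhedral G \<rho>" and m: "is_dual_min G a" and a': "a' \<in> dual_feasible"
  shows "G a \<le> G a' - \<rho> * norm (a - a')"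
proof -
  obtain a0 where a0: "a0 \<in> dual_feasible" "is_dual_min G a0"
     "\<forall>a'\<in>dual_feasible. G a0 \<le> G a' - \<rho> * norm (a0 - a')" and rp: "0 < \<rho>"
    using p unfolding polyhedral_def by blast
  have "G a0 \<le> G a" "G a \<le> G a0" using a0 m unfolding is_dual_min_def by auto
  moreover have "G a0 \<le> G a - \<rho> * norm (a0 - a)" using a0(3) m unfolding is_dual_min_def by auto
  ultimately have "\<rho> * norm (a0 - a) \<le> 0" by linarith
  hence "norm (a0 - a) \<le> 0" using rp by (simp add: mult_le_0_iff)
  hence "a0 = a" by simp
  thus ?thesis using a0(3) a' by blast
qed

lemma poly_mono:
  fixes G :: "('n::finite,'m::finite) dualvar \<Rightarrow> real"
  assumes "polyhedral G \<rho>" "0 < \<rho>'" "\<rho>' \<le> \<rho>"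
  shows "polyhedral G \<rho>'"
proof -
  obtain a where a: "a \<in> dual_feasible" "is_dual_min G a"
     "\<forall>a'\<in>dual_feasible. G a \<le> G a' - \<rho> * norm (a - a')"
    using assms(1) unfolding polyhedral_def by blast
  have "\<forall>a'\<in>dual_feasible. G a \<le> G a' - \<rho>' * norm (a - a')"
  proof
    fix a' :: "('n,'m) dualvar" assume "a' \<in> dual_feasible"
    hence "G a \<le> G a' - \<rho> * norm (a - a')" using a by auto
    moreover have "\<rho>' * norm (a - a') \<le> \<rho> * norm (a - a')" using assms by (simp add: mult_right_mono)
    ultimately show "G a \<le> G a' - \<rho>' * norm (a - a')" by linarith
  qed
  thus ?thesis using a assms(2) unfolding polyhedral_def by blast
qed

lemma feas_scale: "0 < (t::real) \<Longrightarrow> (t *\<^sub>R a \<in> dual_feasible) = (a \<in> dual_feasible)"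
  by (cases a) (auto simp: dual_feasible_def zero_le_mult_iff)

lemma feas_zero: "0 \<in> dual_feasible"
  by (simp add: dual_feasible_def zero_prod_def)

lemma poly_scale:
  fixes F H :: "('n::finite,'m::finite) dualvar \<Rightarrow> real"
  assumes F: "\<And>\<alpha>. F \<alpha> = V * H ((1/V) *\<^sub>R \<alpha>)" and V: "0 < V" and p: "polyhedral H \<rho>"
  shows "polyhedral F \<rho>"
proof -
  obtain a where a: "a \<in> dual_feasible" "is_dual_min H a"
     "\<forall>a'\<in>dual_feasible. H a \<le> H a' - \<rho> * norm (a - a')" and rp: "0 < \<rho>"
    using p unfolding polyhedral_def by blast
  define b where "b = V *\<^sub>R a"
  have ab: "(1/V) *\<^sub>R b = a" using V by (simp add: b_def)
  have bf: "b \<in> dual_feasible" by (simp add: b_def feas_scale[OF V] a(1))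
  have key: "F b \<le> F b' - \<rho> * norm (b - b')" if b': "b' \<in> dual_feasible" for b'
  proof -
    have "(1/V) *\<^sub>R b' \<in> dual_feasible" by (simp add: feas_scale V b')
    hence "H a \<le> H ((1/V) *\<^sub>R b') - \<rho> * norm (a - (1/V) *\<^sub>R b')" using a(3) by blast
    hence "V * H a \<le> V * (H ((1/V) *\<^sub>R b') - \<rho> * norm (a - (1/V) *\<^sub>R b'))"
      using V by simp
    moreover have eqn: "V * norm (a - (1/V) *\<^sub>R b') = norm (b - b')"
    proof -
      have "b - b' = V *\<^sub>R (a - (1/V) *\<^sub>R b')" using V by (simp add: b_def algebra_simps)
      thus ?thesis using V by simp
    qed
    moreover have "V * (\<rho> * norm (a - (1/V) *\<^sub>R b')) = \<rho> * norm (b - b')"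
      using eqn by (metis mult.left_commute)
    ultimately show ?thesis using F[of b] F[of b'] ab by (simp add: right_diff_distrib)
  qed
  have "is_dual_min F b" unfolding is_dual_min_def
  proof (intro conjI ballI bf)
    fix b' :: "('n,'m) dualvar" assume "b' \<in> dual_feasible"
    from key[OF this] rp show "F b \<le> F b'" by (smt (verit) mult_nonneg_nonneg norm_ge_zero)
  qed
  thus ?thesis using key bf rp unfolding polyhedral_def by blast
qed

locale sys =
  fixes \<pi> :: "'k::finite \<Rightarrow> real"
    and A :: "'k \<Rightarrow> real^'n::finite" and e :: "'k \<Rightarrow> real^'m::finite"
    and B :: "'k \<Rightarrow> ('n,'m) alloc set"
    and mu :: "'k \<Rightarrow> ('n,'m) alloc \<Rightarrow> 'n \<Rightarrow> real"
    and c :: "'k \<Rightarrow> ('n,'m) alloc \<Rightarrow> real"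
    and r :: "'k \<Rightarrow> 'n \<Rightarrow> real \<Rightarrow> real"
    and U U' :: "'n \<Rightarrow> real \<Rightarrow> real"
    and Amax hmax bmax mumax cmax rmax \<beta> \<epsilon>z \<epsilon>r \<eta>0 :: real
  assumes pi_prob: "prob_vec \<pi>"
    and A_bd: "\<forall>k n. 0 \<le> A k $ n \<and> A k $ n \<le> Amax"
    and e_bd: "\<forall>k m. 0 \<le> e k $ m \<and> e k $ m \<le> hmax"
    and B_fin: "\<forall>k. finite (B k)"
    and B_nonneg: "\<forall>k. \<forall>b\<in>B k. \<forall>m n. 0 \<le> b $ m $ n"
    and bmax_def: "bmax = Max {b $ m $ n | k b m n. b \<in> B k}"
    and mu_bd: "\<forall>k. \<forall>b\<in>B k. \<forall>n. 0 \<le> mu k b n \<and> mu k b n \<le> mumax"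
    and c_bd: "\<forall>k. \<forall>b\<in>B k. 0 \<le> c k b \<and> c k b \<le> cmax"
    and r_bd: "\<forall>k n x. 0 \<le> r k n x \<and> r k n x \<le> rmax"
    and U_incr: "\<forall>n. strict_mono_on {0..} (U n)"
    and U_conc: "\<forall>n. concave_on {0..} (U n)"
    and U_0: "\<forall>n. U n 0 = 0"
    and U_deriv: "\<forall>n. \<forall>x\<ge>0. (U n has_real_derivative U' n x) (at x within {0..})"
    and beta_def: "\<beta> = Sup {U' n x | n x. 0 \<le> x}"
    and ass1: "assumption1 \<pi> A e B mu r rmax \<epsilon>z \<epsilon>r \<eta>0"
begin

lemma eps_pos: "0 < \<epsilon>z" "0 < \<epsilon>r" "0 < \<eta>0"
  using ass1 unfolding assumption1_def by auto

lemma B_ne: "B k \<noteq> {}"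
proof -
  have "close_est \<pi> r mu B \<epsilon>z \<epsilon>r \<pi> (true_table r mu)"
    using eps_pos by (simp add: close_est_def true_table_def)
  with ass1 pi_prob have "\<exists>(\<gamma>::real^'n) (L::'k \<Rightarrow> nat) (Rs::'k \<Rightarrow> nat \<Rightarrow> real^'n) (bs::'k \<Rightarrow> nat \<Rightarrow> ('n,'m) alloc)
          (hs::'k \<Rightarrow> nat \<Rightarrow> real^'m) (lam::'k \<Rightarrow> nat \<Rightarrow> real).
        (\<forall>k. \<forall>i<L k. bs k i \<in> B k) \<and> (\<forall>k. (\<Sum>i<L k. lam k i) = 1)"
    unfolding assumption1_def by (smt (verit))
  then obtain L :: "'k \<Rightarrow> nat" and bs :: "'k \<Rightarrow> nat \<Rightarrow> ('n,'m) alloc" and lam :: "'k \<Rightarrow> nat \<Rightarrow> real"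
    where h: "\<forall>k. \<forall>i<L k. bs k i \<in> B k" "\<forall>k. (\<Sum>i<L k. lam k i) = 1" by blast
  have "L k \<noteq> 0" using h(2)[rule_format, of k] by (metis lessThan_0 sum.empty zero_neq_one)
  thus ?thesis using h(1) by blast
qed

lemma rmax_nn: "0 \<le> rmax" using r_bd by (meson order_trans)
lemma Amax_nn: "0 \<le> Amax" using A_bd by (meson order_trans)
lemma hmax_nn: "0 \<le> hmax" using e_bd by (meson order_trans)
lemma cmax_nn: "0 \<le> cmax" using c_bd B_ne by (meson all_not_in_conv order_trans)
lemma mumax_nn: "0 \<le> mumax" using mu_bd B_ne by (meson all_not_in_conv order_trans)

lemma bmax_bd: assumes "b \<in> B k" shows "b $ m $ n \<le> bmax"
proof -
  have "{b $ m $ n | k b m n. b \<in> B k} \<subseteq> (\<lambda>(b,m,n). b $ m $ n) ` ((\<Union>k. B k) \<times> UNIV \<times> UNIV)"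
    by (auto simp: image_def)
  moreover have "finite ((\<Union>k. B k) \<times> (UNIV::'m set) \<times> (UNIV::'n set))" using B_fin by simp
  ultimately have "finite {b $ m $ n | k b m n. b \<in> B k}" by (meson finite_imageI finite_subset)
  thus ?thesis unfolding bmax_def by (rule Max_ge) (use assms in blast)
qed

lemma bmax_nn: "0 \<le> bmax"
proof -
  obtain b where "b \<in> B undefined" using B_ne by blast
  thus ?thesis using bmax_bd B_nonneg by (meson order_trans)
qed

lemma U_nn: "0 \<le> x \<Longrightarrow> 0 \<le> U n x"
  using U_incr U_0 by (metis atLeast_iff order_le_less strict_mono_onD order.refl)

lemma U_mono: "0 \<le> x \<Longrightarrow> x \<le> y \<Longrightarrow> U n x \<le> U n y"
  using U_incr by (metis atLeast_iff order_le_less strict_mono_onD order_trans)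

lemma U'_le: assumes "0 < x" shows "U' n x \<le> U' n 0"
proof -
  have "U' n x * x \<le> U n x - U n 0"
    using concave_deriv_le_slope[of "U n" "U' n x" x] U_conc U_deriv assms by auto
  also have "\<dots> \<le> U' n 0 * x"
    using concave_deriv0_bound[of "U n" "U' n 0" x] U_conc U_deriv assms by auto
  finally show ?thesis using assms by simp
qed

lemma U'0_le_beta: "U' n 0 \<le> \<beta>"
proof -
  have bd: "bdd_above {U' n x | n x. 0 \<le> x}"
  proof (rule bdd_aboveI)
    fix y assume "y \<in> {U' n x | n x. 0 \<le> x}"
    then obtain n x where y: "y = U' n x" "0 \<le> x" by blast
    have "U' n x \<le> U' n 0" using U'_le[of x n] y(2) by (cases "x = 0") auto
    also have "\<dots> \<le> \<bar>U' n 0\<bar>" by simp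
    also have "\<dots> \<le> (\<Sum>n\<in>UNIV. \<bar>U' n 0\<bar>)" by (rule member_le_sum) auto
    finally show "y \<le> (\<Sum>n\<in>UNIV. \<bar>U' n 0\<bar>)" using y by simp
  qed
  show ?thesis unfolding beta_def by (rule cSup_upper[OF _ bd]) blast
qed

definition Uc where "Uc = (\<Sum>n\<in>UNIV. U n rmax)"

lemma Uc_nn: "0 \<le> Uc" unfolding Uc_def by (rule sum_nonneg) (simp add: U_nn rmax_nn)

lemma Uc_le: "Uc \<le> real CARD('n) * \<beta> * rmax"
proof -
  have "U n rmax \<le> \<beta> * rmax" for n
  proof (cases "rmax = 0")
    case True thus ?thesis using U_0 by simp
  next
    case False
    hence "0 < rmax" using rmax_nn by simp
    hence "U n rmax - U n 0 \<le> U' n 0 * rmax"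
      using concave_deriv0_bound[of "U n" "U' n 0" rmax] U_conc U_deriv by auto
    also have "\<dots> \<le> \<beta> * rmax" using U'0_le_beta rmax_nn by (simp add: mult_right_mono)
    finally show ?thesis using U_0 by simp
  qed
  hence "Uc \<le> (\<Sum>n\<in>(UNIV::'n set). \<beta> * rmax)" unfolding Uc_def by (rule sum_mono)
  thus ?thesis by simp
qed


abbreviation X where "X k \<equiv> Xs rmax (A k) (e k) (B k)"

definition tab_ok :: "real \<Rightarrow> ('k \<Rightarrow> ('n,'m) alloc \<Rightarrow> 'n \<Rightarrow> real) \<Rightarrow> bool" where
  "tab_ok C rho \<longleftrightarrow> (\<forall>k. \<forall>b\<in>B k. \<forall>n. \<bar>rho k b n\<bar> \<le> C)"

definition Lc where "Lc C = real CARD('n)*(C + rmax) + real CARD('n)*(Amax+mumax)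
   + real CARD('m)*(real CARD('n)*bmax + hmax)"

lemma tab_C_nn: assumes "tab_ok C rho" shows "0 \<le> C"
proof -
  obtain b where "b \<in> B undefined" using B_ne by blast
  thus ?thesis using assms unfolding tab_ok_def by (meson abs_ge_zero order_trans)
qed

lemma Lc_nn: "tab_ok C rho \<Longrightarrow> 0 \<le> Lc C"
  using tab_C_nn rmax_nn Amax_nn mumax_nn bmax_nn hmax_nn unfolding Lc_def by simp

lemma X_ne: "X k \<noteq> {}"
proof -
  obtain b where "b \<in> B k" using B_ne by blast
  hence "(0, 0, b, 0) \<in> X k" using rmax_nn A_bd e_bd by (simp add: Xs_def)
  thus ?thesis by blast
qed

lemma vl_bd_loc:
  assumes t: "tab_ok C rho" and V: "0 \<le> V" and x: "x \<in> X k"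
  shows "\<bar>vl V U (c k) (rho k) (mu k) \<alpha> x\<bar> \<le> V*(Uc+cmax) + Lc C * norm \<alpha>"
proof -
  obtain ad aq ah where a: "\<alpha> = (ad,aq,ah)" by (cases \<alpha>) auto
  have C: "0 \<le> C" by (rule tab_C_nn[OF t])
  have "\<bar>vl V U (c k) (rho k) (mu k) (ad,aq,ah) x\<bar> \<le> V*(Uc+cmax) + (\<Sum>n\<in>UNIV. \<bar>ad$n\<bar>)*(C+rmax)
     + (\<Sum>n\<in>UNIV. \<bar>aq$n\<bar>)*(Amax+mumax) + (\<Sum>m\<in>UNIV. \<bar>ah$m\<bar>)*(real CARD('n)*bmax+hmax)"
  proof (rule vl_abs_bd[OF x V])
    fix \<gamma> :: "real^'n" assume g: "\<forall>n. 0 \<le> \<gamma>$n \<and> \<gamma>$n \<le> rmax"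
    have "0 \<le> (\<Sum>n\<in>UNIV. U n (\<gamma>$n))" by (rule sum_nonneg) (simp add: U_nn g)
    moreover have "(\<Sum>n\<in>UNIV. U n (\<gamma>$n)) \<le> Uc" unfolding Uc_def by (rule sum_mono) (simp add: U_mono g)
    ultimately show "\<bar>\<Sum>n\<in>UNIV. U n (\<gamma>$n)\<bar> \<le> Uc" by simp
  next
    fix b assume "b \<in> B k" thus "\<bar>c k b\<bar> \<le> cmax" using c_bd by auto
  next
    fix b n g assume b: "b \<in> B k" "0 \<le> g" "g \<le> rmax"
    moreover have "\<bar>rho k b n\<bar> \<le> C" using t b by (auto simp: tab_ok_def)
    ultimately show "\<bar>rho k b n - g\<bar> \<le> C + rmax" by (smt (verit))
  next
    fix b n R assume b: "b \<in> B k" "0 \<le> R" "R \<le> A k $ n"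
    moreover have "A k $ n \<le> Amax" "0 \<le> mu k b n" "mu k b n \<le> mumax" using A_bd mu_bd b by auto
    ultimately show "\<bar>R - mu k b n\<bar> \<le> Amax + mumax" by (smt (verit))
  next
    fix b m h assume b: "b \<in> B k" "0 \<le> h" "h \<le> e k $ m"
    have "0 \<le> (\<Sum>n\<in>UNIV. b$m$n)" using B_nonneg b by (auto intro: sum_nonneg)
    moreover have "(\<Sum>n\<in>UNIV. b$m$n) \<le> real CARD('n) * bmax"
      using sum_bounded_above[of UNIV "\<lambda>n. b$m$n" bmax] bmax_bd b by auto
    moreover have "e k $ m \<le> hmax" using e_bd by auto
    ultimately show "\<bar>(\<Sum>n\<in>UNIV. b$m$n) - h\<bar> \<le> real CARD('n)*bmax + hmax" using b by (smt (verit))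
  qed
  also have "\<dots> \<le> V*(Uc+cmax) + Lc C * norm \<alpha>"
  proof -
    have s1: "(\<Sum>n\<in>UNIV. \<bar>ad$n\<bar>) \<le> real CARD('n) * norm \<alpha>"
      using order_trans[OF sum_abs_comp_le[of ad] mult_left_mono[OF norm_comp1[of ad aq ah]]] a by simp
    have s2: "(\<Sum>n\<in>UNIV. \<bar>aq$n\<bar>) \<le> real CARD('n) * norm \<alpha>"
      using order_trans[OF sum_abs_comp_le[of aq] mult_left_mono[OF norm_comp2[of aq ad ah]]] a by simp
    have s3: "(\<Sum>m\<in>UNIV. \<bar>ah$m\<bar>) \<le> real CARD('m) * norm \<alpha>"
      using order_trans[OF sum_abs_comp_le[of ah] mult_left_mono[OF norm_comp3[of ah ad aq]]] a by simp
    have p1: "(\<Sum>n\<in>UNIV. \<bar>ad$n\<bar>)*(C+rmax) \<le> (real CARD('n) * norm \<alpha>)*(C+rmax)"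
      by (rule mult_right_mono[OF s1]) (use C rmax_nn in simp)
    have p2: "(\<Sum>n\<in>UNIV. \<bar>aq$n\<bar>)*(Amax+mumax) \<le> (real CARD('n) * norm \<alpha>)*(Amax+mumax)"
      by (rule mult_right_mono[OF s2]) (use Amax_nn mumax_nn in simp)
    have p3: "(\<Sum>m\<in>UNIV. \<bar>ah$m\<bar>)*(real CARD('n)*bmax+hmax) \<le> (real CARD('m) * norm \<alpha>)*(real CARD('n)*bmax+hmax)"
      by (rule mult_right_mono[OF s3]) (use bmax_nn hmax_nn in simp)
    have "Lc C * norm \<alpha> = (real CARD('n) * norm \<alpha>)*(C+rmax) + (real CARD('n) * norm \<alpha>)*(Amax+mumax)
        + (real CARD('m) * norm \<alpha>)*(real CARD('n)*bmax+hmax)" unfolding Lc_def by (simp add: algebra_simps)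
    thus ?thesis using p1 p2 p3 by linarith
  qed
  finally show ?thesis using a by simp
qed

lemma gk_bd: "tab_ok C rho \<Longrightarrow> 0 \<le> V \<Longrightarrow>
   \<bar>gk V U rmax (c k) (rho k) (mu k) (A k) (e k) (B k) \<alpha>\<bar> \<le> V*(Uc+cmax) + Lc C * norm \<alpha>"
  unfolding gk_alt by (rule sup_abs_bd(1)[OF X_ne]) (rule vl_bd_loc)

lemma gk_bdd: "tab_ok C rho \<Longrightarrow> 0 \<le> V \<Longrightarrow> bdd_above (vl V U (c k) (rho k) (mu k) \<alpha> ` X k)"
  by (rule sup_abs_bd(2)[OF X_ne]) (rule vl_bd_loc)

lemma gk0: "0 \<le> V \<Longrightarrow> gk V U rmax (c k) (rho k) (mu k) (A k) (e k) (B k) 0 \<le> V*Uc"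
  unfolding gk_alt
proof (rule sup_least'[OF X_ne])
  fix x assume V: "0 \<le> V" and x: "x \<in> X k"
  obtain \<gamma> R b h where xe: "x = (\<gamma>,R,b,h)" by (cases x) auto
  from x have g: "\<forall>n. 0 \<le> \<gamma>$n \<and> \<gamma>$n \<le> rmax" and b: "b \<in> B k" by (auto simp: Xs_def xe)
  have "(\<Sum>n\<in>UNIV. U n (\<gamma>$n)) \<le> Uc" unfolding Uc_def by (rule sum_mono) (simp add: U_mono g)
  moreover have "0 \<le> c k b" using c_bd b by auto
  ultimately have "(\<Sum>n\<in>UNIV. U n (\<gamma>$n)) - c k b \<le> Uc" by linarith
  hence "V * ((\<Sum>n\<in>UNIV. U n (\<gamma>$n)) - c k b) \<le> V * Uc" using V by (rule mult_left_mono)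
  thus "vl V U (c k) (rho k) (mu k) 0 x \<le> V * Uc" by (simp add: vl_def xe zero_prod_def)
qed

lemma gk_double:
  assumes t: "tab_ok C rho" and V: "0 \<le> V"
  shows "gk V U rmax (c k) (rho k) (mu k) (A k) (e k) (B k) (2 *\<^sub>R \<alpha>)
     \<le> 2 * gk V U rmax (c k) (rho k) (mu k) (A k) (e k) (B k) \<alpha> + V*cmax"
  unfolding gk_alt
proof (rule sup_least'[OF X_ne])
  fix x assume x: "x \<in> X k"
  obtain \<gamma> R b h where xe: "x = (\<gamma>,R,b,h)" by (cases x) auto
  from x have g: "\<forall>n. 0 \<le> \<gamma>$n \<and> \<gamma>$n \<le> rmax" and b: "b \<in> B k" by (auto simp: Xs_def xe)
  have "0 \<le> (\<Sum>n\<in>UNIV. U n (\<gamma>$n))" by (rule sum_nonneg) (simp add: U_nn g)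
  moreover have "c k b \<le> cmax" using c_bd b by auto
  ultimately have "- cmax \<le> (\<Sum>n\<in>UNIV. U n (\<gamma>$n)) - c k b" by linarith
  hence "V * (- cmax) \<le> V * ((\<Sum>n\<in>UNIV. U n (\<gamma>$n)) - c k b)" using V by (rule mult_left_mono)
  moreover have "vl V U (c k) (rho k) (mu k) \<alpha> x \<le> Sup (vl V U (c k) (rho k) (mu k) \<alpha> ` X k)"
    by (rule sup_upper'[OF gk_bdd[OF t V] x])
  moreover have "vl V U (c k) (rho k) (mu k) (2 *\<^sub>R \<alpha>) x = 2 * vl V U (c k) (rho k) (mu k) \<alpha> x
       - V * ((\<Sum>n\<in>UNIV. U n (\<gamma>$n)) - c k b)" using vl_double[of V U "c k" "rho k" "mu k" \<alpha> x] by (simp add: xe)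
  ultimately show "vl V U (c k) (rho k) (mu k) (2 *\<^sub>R \<alpha>) x
      \<le> 2 * Sup (vl V U (c k) (rho k) (mu k) \<alpha> ` X k) + V * cmax" by simp
qed

lemma gk_pert:
  assumes t1: "tab_ok C rho1" and t2: "tab_ok C rho2"
    and d: "\<forall>k. \<forall>b\<in>B k. \<forall>n. \<bar>rho1 k b n - rho2 k b n\<bar> \<le> dd" and V: "0 \<le> V"
  shows "gk V U rmax (c k) (rho1 k) (mu k) (A k) (e k) (B k) \<alpha>
     \<le> gk V U rmax (c k) (rho2 k) (mu k) (A k) (e k) (B k) \<alpha> + dd * (real CARD('n) * norm \<alpha>)"
  unfolding gk_alt
proof (rule sup_shift[OF X_ne gk_bdd[OF t2 V]])
  fix x assume x: "x \<in> X k"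
  obtain \<gamma> R b h where xe: "x = (\<gamma>,R,b,h)" by (cases x) auto
  from x have b: "b \<in> B k" by (auto simp: Xs_def xe)
  obtain ad aq ah where a: "\<alpha> = (ad,aq,ah)" by (cases \<alpha>) auto
  have dd: "0 \<le> dd" using d b by (meson abs_ge_zero order_trans)
  have "\<bar>\<Sum>n\<in>UNIV. ad$n * (rho2 k b n - rho1 k b n)\<bar> \<le> (\<Sum>n\<in>UNIV. \<bar>ad$n\<bar>) * dd"
    by (rule sum_abs_mult_bd) (use d b in \<open>auto simp: abs_minus_commute\<close>)
  also have "\<dots> \<le> (real CARD('n) * norm \<alpha>) * dd"
  proof -
    have s: "(\<Sum>n\<in>UNIV. \<bar>ad$n\<bar>) \<le> real CARD('n) * norm \<alpha>"
      using order_trans[OF sum_abs_comp_le[of ad] mult_left_mono[OF norm_comp1[of ad aq ah]]] a by simp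
    show ?thesis using mult_right_mono[OF s dd] .
  qed
  finally have "vl V U (c k) (rho1 k) (mu k) \<alpha> x - vl V U (c k) (rho2 k) (mu k) \<alpha> x \<le> dd * (real CARD('n) * norm \<alpha>)"
    using vl_pert[of V U "c k" "rho1 k" "mu k" ad aq ah x "rho2 k"] a xe by (simp add: mult.commute)
  thus "vl V U (c k) (rho1 k) (mu k) \<alpha> x \<le> vl V U (c k) (rho2 k) (mu k) \<alpha> x + dd * (real CARD('n) * norm \<alpha>)"
    by linarith
qed

lemma gk_shift:
  assumes t: "tab_ok C rho" and V: "0 \<le> V"
  shows "gk V U rmax (c k) (rho k) (mu k) (A k) (e k) (B k) ((ad,aq,ah) + (axis n0 1, 0, 0))
     \<le> gk V U rmax (c k) (rho k) (mu k) (A k) (e k) (B k) (ad,aq,ah) + (C + rmax)"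
  unfolding gk_alt
proof (rule sup_shift[OF X_ne gk_bdd[OF t V]])
  fix x assume x: "x \<in> X k"
  obtain \<gamma> R b h where xe: "x = (\<gamma>,R,b,h)" by (cases x) auto
  from x have g: "\<forall>n. 0 \<le> \<gamma>$n \<and> \<gamma>$n \<le> rmax" and b: "b \<in> B k" by (auto simp: Xs_def xe)
  have "\<bar>rho k b n0\<bar> \<le> C" using t b by (auto simp: tab_ok_def)
  hence "- (rho k b n0 - \<gamma>$n0) \<le> C + rmax" using g by (smt (verit))
  thus "vl V U (c k) (rho k) (mu k) ((ad,aq,ah) + (axis n0 1, 0, 0)) x
     \<le> vl V U (c k) (rho k) (mu k) (ad,aq,ah) x + (C + rmax)"
    using vl_shift[of V U "c k" "rho k" "mu k" ad aq ah n0 x] xe by simp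
qed

lemma gk_scale:
  assumes t: "tab_ok C rho" and V: "0 < V"
  shows "gk V U rmax (c k) (rho k) (mu k) (A k) (e k) (B k) \<alpha>
     = V * gk 1 U rmax (c k) (rho k) (mu k) (A k) (e k) (B k) ((1/V) *\<^sub>R \<alpha>)"
proof -
  have "vl V U (c k) (rho k) (mu k) \<alpha> ` X k = (\<lambda>x. V * vl 1 U (c k) (rho k) (mu k) ((1/V) *\<^sub>R \<alpha>) x) ` X k"
    by (rule image_cong[OF refl]) (rule vl_scale[OF V])
  thus ?thesis unfolding gk_alt using sup_scale[OF X_ne gk_bdd[OF t, of 1] V] by simp
qed


lemma pv_nn: "prob_vec p \<Longrightarrow> 0 \<le> p k" by (simp add: prob_vec_def)

lemma pv_mono: "prob_vec p \<Longrightarrow> (\<And>k. f k \<le> g k) \<Longrightarrow> (\<Sum>k\<in>UNIV. p k * f k) \<le> (\<Sum>k\<in>UNIV. p k * g k)"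
  by (rule sum_mono) (simp add: mult_left_mono pv_nn)

lemma pv_const: "prob_vec p \<Longrightarrow> (\<Sum>k\<in>UNIV. p k * (f k + d)) = (\<Sum>k\<in>UNIV. p k * f k) + d"
  by (simp add: prob_vec_def distrib_left sum.distrib sum_distrib_right[symmetric])

lemma pv_cmult: "(\<Sum>k\<in>UNIV. p k * ((t::real) * f k)) = t * (\<Sum>k\<in>UNIV. p k * f k)"
  by (simp add: sum_distrib_left mult.left_commute)

lemma G0: "prob_vec p \<Longrightarrow> 0 \<le> V \<Longrightarrow> dual_fun V U rmax c rho mu A e B p 0 \<le> V*Uc"
proof -
  assume p: "prob_vec p" and V: "0 \<le> V"
  have "dual_fun V U rmax c rho mu A e B p 0 \<le> (\<Sum>k\<in>UNIV. p k * (0 + V*Uc))"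
    unfolding dual_fun_def by (rule pv_mono[OF p]) (simp add: gk0 V)
  thus ?thesis using pv_const[OF p, of "\<lambda>k. 0"] by simp
qed

lemma G_double: assumes t: "tab_ok C rho" and V: "0 \<le> V" and p: "prob_vec p"
  shows "dual_fun V U rmax c rho mu A e B p (2 *\<^sub>R \<alpha>) \<le> 2 * dual_fun V U rmax c rho mu A e B p \<alpha> + V*cmax"
proof -
  have "dual_fun V U rmax c rho mu A e B p (2 *\<^sub>R \<alpha>)
     \<le> (\<Sum>k\<in>UNIV. p k * (2 * gk V U rmax (c k) (rho k) (mu k) (A k) (e k) (B k) \<alpha> + V*cmax))"
    unfolding dual_fun_def by (rule pv_mono[OF p]) (rule gk_double[OF t V])
  moreover have "(\<Sum>k\<in>UNIV. p k * (2 * gk V U rmax (c k) (rho k) (mu k) (A k) (e k) (B k) \<alpha> + V*cmax))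
     = 2 * dual_fun V U rmax c rho mu A e B p \<alpha> + V*cmax"
    unfolding pv_const[OF p] pv_cmult dual_fun_def ..
  ultimately show ?thesis by simp
qed

lemma G_min_ge: assumes t: "tab_ok C rho" and V: "0 \<le> V" and p: "prob_vec p"
  and m: "is_dual_min (dual_fun V U rmax c rho mu A e B p) a"
  shows "- (V*cmax) \<le> dual_fun V U rmax c rho mu A e B p a"
proof -
  have "2 *\<^sub>R a \<in> dual_feasible" using m feas_scale[of 2 a] by (simp add: is_dual_min_def)
  hence "dual_fun V U rmax c rho mu A e B p a \<le> dual_fun V U rmax c rho mu A e B p (2 *\<^sub>R a)"
    using m by (simp add: is_dual_min_def)
  thus ?thesis using G_double[OF t V p, of a] by linarith
qed

lemma min_norm: assumes t: "tab_ok C rho" and V: "0 \<le> V" and p: "prob_vec p"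
  and P: "polyhedral (dual_fun V U rmax c rho mu A e B p) \<rho>"
  and m: "is_dual_min (dual_fun V U rmax c rho mu A e B p) a"
  shows "\<rho> * norm a \<le> V*(Uc+cmax)"
proof -
  have "dual_fun V U rmax c rho mu A e B p a \<le> dual_fun V U rmax c rho mu A e B p 0 - \<rho> * norm (a - 0)"
    by (rule poly_unique[OF P m feas_zero])
  thus ?thesis using G0[OF p V, of rho] G_min_ge[OF t V p m] by (simp add: algebra_simps)
qed

lemma G_pert:
  assumes t1: "tab_ok C rho1" and t2: "tab_ok C rho2"
    and d: "\<forall>k. \<forall>b\<in>B k. \<forall>n. \<bar>rho1 k b n - rho2 k b n\<bar> \<le> dd" and V: "0 \<le> V" and p: "prob_vec p"
  shows "dual_fun V U rmax c rho1 mu A e B p \<alpha> \<le> dual_fun V U rmax c rho2 mu A e B p \<alpha> + dd * (real CARD('n) * norm \<alpha>)"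
proof -
  have "dual_fun V U rmax c rho1 mu A e B p \<alpha>
     \<le> (\<Sum>k\<in>UNIV. p k * (gk V U rmax (c k) (rho2 k) (mu k) (A k) (e k) (B k) \<alpha> + dd * (real CARD('n) * norm \<alpha>)))"
    unfolding dual_fun_def by (rule pv_mono[OF p]) (rule gk_pert[OF t1 t2 d V])
  thus ?thesis using pv_const[OF p] unfolding dual_fun_def by simp
qed

lemma G_rho_bd: assumes t: "tab_ok C rho" and V: "0 \<le> V" and p: "prob_vec p"
  and P: "polyhedral (dual_fun V U rmax c rho mu A e B p) \<rho>"
  shows "\<rho> \<le> C + rmax"
proof -
  obtain a where a: "a \<in> dual_feasible"
     "\<forall>a'\<in>dual_feasible. dual_fun V U rmax c rho mu A e B p a \<le> dual_fun V U rmax c rho mu A e B p a' - \<rho> * norm (a - a')"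
    using P unfolding polyhedral_def by blast
  obtain ad aq ah where ae: "a = (ad,aq,ah)" by (cases a) auto
  define a' where "a' = (ad,aq,ah) + (axis undefined 1, 0, 0)"
  have "a' \<in> dual_feasible" using a(1) unfolding a'_def ae dual_feasible_def
    by (auto simp: axis_def)
  hence 1: "dual_fun V U rmax c rho mu A e B p a \<le> dual_fun V U rmax c rho mu A e B p a' - \<rho> * norm (a - a')"
    using a(2) by blast
  have n: "norm (a - a') = 1" unfolding a'_def ae by (simp add: norm_Pair)
  have "dual_fun V U rmax c rho mu A e B p a'
     \<le> (\<Sum>k\<in>UNIV. p k * (gk V U rmax (c k) (rho k) (mu k) (A k) (e k) (B k) a + (C + rmax)))"
    unfolding dual_fun_def a'_def ae by (rule pv_mono[OF p]) (rule gk_shift[OF t V])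
  hence "dual_fun V U rmax c rho mu A e B p a' \<le> dual_fun V U rmax c rho mu A e B p a + (C + rmax)"
    using pv_const[OF p] unfolding dual_fun_def by simp
  thus ?thesis using 1 n by simp
qed

lemma G_scale: assumes t: "tab_ok C rho" and V: "0 < V"
  shows "dual_fun V U rmax c rho mu A e B p \<alpha> = V * dual_fun 1 U rmax c rho mu A e B p ((1/V) *\<^sub>R \<alpha>)"
  unfolding dual_fun_def using gk_scale[OF t V] pv_cmult by simp

lemma G_weights: "dual_fun V U rmax c rho mu A e B p1 \<alpha> - dual_fun V U rmax c rho mu A e B p2 \<alpha>
   = (\<Sum>k\<in>UNIV. (p1 k - p2 k) * gk V U rmax (c k) (rho k) (mu k) (A k) (e k) (B k) \<alpha>)"
  unfolding dual_fun_def by (simp add: sum_subtractf[symmetric] left_diff_distrib)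

lemma poly_V: assumes t: "tab_ok C rho" and V: "0 < V"
  shows "polyhedral (dual_fun V U rmax c rho mu A e B p) \<rho> \<longleftrightarrow> polyhedral (dual_fun 1 U rmax c rho mu A e B p) \<rho>"
proof
  assume P1: "polyhedral (dual_fun 1 U rmax c rho mu A e B p) \<rho>"
  show "polyhedral (dual_fun V U rmax c rho mu A e B p) \<rho>"
    by (rule poly_scale[where F="dual_fun V U rmax c rho mu A e B p" and H="dual_fun 1 U rmax c rho mu A e B p",
         OF G_scale[OF t V] V P1])
next
  assume P: "polyhedral (dual_fun V U rmax c rho mu A e B p) \<rho>"
  have "dual_fun 1 U rmax c rho mu A e B p \<alpha> = (1/V) * dual_fun V U rmax c rho mu A e B p ((1/(1/V)) *\<^sub>R \<alpha>)" for \<alpha>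
    using G_scale[OF t V, of p "V *\<^sub>R \<alpha>"] V by simp
  thus "polyhedral (dual_fun 1 U rmax c rho mu A e B p) \<rho>"
    by (rule poly_scale) (use V P in auto)
qed

end


lemma fin2:
  fixes D x y W dr N \<rho> \<rho>1 \<eta> V F :: real
  assumes h: "\<rho>1 * D \<le> dr * N * (x + y)" and hx: "\<rho>1 * x \<le> W" and hy: "\<rho>1 * y \<le> W"
    and r1: "0 < \<rho>1" and r: "0 < \<rho>" and rr: "\<rho> \<le> 2*\<rho>1" and dr: "0 \<le> dr" and N: "0 < N"
    and et: "0 < \<eta>" "\<eta> \<le> \<rho>1/(2*N)" and WF: "W \<le> V*F" and xy: "0 \<le> x" "0 \<le> y"
  shows "D \<le> 2*V*F*dr/(\<rho>*\<eta>)"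
proof -
  have W: "0 \<le> W" using hx xy r1 by (smt (verit) mult_nonneg_nonneg)
  have h1: "D \<le> dr*N*(x+y)/\<rho>1" using h r1 by (simp add: le_divide_eq mult.commute)
  have h2: "x + y \<le> 2*W/\<rho>1" using hx hy r1 by (simp add: le_divide_eq algebra_simps)
  have h3: "dr*N*(x+y)/\<rho>1 \<le> dr*N*(2*W/\<rho>1)/\<rho>1"
  proof -
    have "dr*N*(x+y) \<le> dr*N*(2*W/\<rho>1)" by (rule mult_left_mono[OF h2]) (use dr N in simp)
    thus ?thesis using r1 by (intro divide_right_mono) auto
  qed
  have h4: "N/\<rho>1 \<le> 1/(2*\<eta>)" using et r1 N by (simp add: field_simps)
  have h5: "1/\<rho>1 \<le> 2/\<rho>" using rr r r1 by (simp add: field_simps)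
  have e: "dr*N*(2*W/\<rho>1)/\<rho>1 = (2*dr*W) * (N/\<rho>1) * (1/\<rho>1)" by (simp add: field_simps)
  have "dr*N*(2*W/\<rho>1)/\<rho>1 = (2*dr*W) * (N/\<rho>1) * (1/\<rho>1)" by (rule e)
  also have "(2*dr*W) * (N/\<rho>1) * (1/\<rho>1) \<le> (2*dr*W) * (1/(2*\<eta>)) * (2/\<rho>)"
    by (rule mult_mono[OF mult_left_mono[OF h4]]) (use dr W et r1 h5 in auto)
  also have "\<dots> = 2*dr*W/(\<rho>*\<eta>)" using et r by (simp add: field_simps)
  also have "\<dots> \<le> 2*dr*(V*F)/(\<rho>*\<eta>)" using WF dr r et by (simp add: divide_right_mono mult_left_mono)
  finally have "dr*N*(2*W/\<rho>1)/\<rho>1 \<le> 2*dr*(V*F)/(\<rho>*\<eta>)" .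
  moreover have "2*dr*(V*F)/(\<rho>*\<eta>) = 2*V*F*dr/(\<rho>*\<eta>)" by (simp add: ac_simps)
  ultimately show ?thesis using h1 h3 by linarith
qed

lemma fin1:
  fixes D x y W dz P L \<rho> \<rho>1 \<eta> V F Wc :: real
  assumes h: "\<rho>1 * D \<le> P * dz * (2*W + L*(x+y))" and hx: "\<rho>1 * x \<le> W" and hy: "\<rho>1 * y \<le> W"
    and r1: "0 < \<rho>1" and r: "0 < \<rho>" and rr: "\<rho> \<le> 2*\<rho>1" and dz: "0 \<le> dz" and P: "0 \<le> P" and L: "0 \<le> L"
    and et: "0 < \<eta>" "\<eta> \<le> 1/(2*(1 + L/\<rho>1))" and WF: "W \<le> V*F" and Wc: "1 \<le> Wc" and xy: "0 \<le> x" "0 \<le> y"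
  shows "D \<le> 2*dz*V*F*(P*Wc/\<eta>)/\<rho>"
proof -
  have W: "0 \<le> W" using hx xy r1 by (smt (verit) mult_nonneg_nonneg)
  have h2: "x + y \<le> 2*W/\<rho>1" using hx hy r1 by (simp add: le_divide_eq algebra_simps)
  have "L*(x+y) \<le> L*(2*W/\<rho>1)" using h2 L by (rule mult_left_mono)
  hence "2*W + L*(x+y) \<le> 2*W*(1 + L/\<rho>1)" by (simp add: algebra_simps)
  hence "P * dz * (2*W + L*(x+y)) \<le> P * dz * (2*W*(1 + L/\<rho>1))" using P dz by (simp add: mult_left_mono)
  hence h1: "D \<le> P * dz * (2*W*(1 + L/\<rho>1)) / \<rho>1" using h r1 by (simp add: le_divide_eq mult.commute)
  have h4: "1 + L/\<rho>1 \<le> 1/(2*\<eta>)" using et r1 L by (simp add: field_simps)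
  have h5: "1/\<rho>1 \<le> 2/\<rho>" using rr r r1 by (simp add: field_simps)
  have e: "P * dz * (2*W*(1 + L/\<rho>1)) / \<rho>1 = (2*P*dz*W) * (1 + L/\<rho>1) * (1/\<rho>1)" by (simp add: field_simps)
  have "(2*P*dz*W) * (1 + L/\<rho>1) * (1/\<rho>1) \<le> (2*P*dz*W) * (1/(2*\<eta>)) * (2/\<rho>)"
    by (rule mult_mono[OF mult_left_mono[OF h4]]) (use dz W et r1 P L h5 in auto)
  also have "\<dots> = 2*P*dz*W/(\<rho>*\<eta>)" using et r by (simp add: field_simps)
  also have "\<dots> \<le> 2*P*dz*(V*F*Wc)/(\<rho>*\<eta>)"
  proof -
    have "W \<le> V*F*Wc" using WF Wc W by (smt (verit) mult_le_cancel_left1 mult.commute)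
    thus ?thesis using dz P r et by (simp add: divide_right_mono mult_left_mono)
  qed
  also have "\<dots> = 2*dz*V*F*(P*Wc/\<eta>)/\<rho>" using et r by (simp add: field_simps)
  finally show ?thesis using h1 e by simp
qed


context sys
begin

lemma ce_mono: "close_est \<pi> r mu B d1 d2 p rh \<Longrightarrow> d1 \<le> d1' \<Longrightarrow> d2 \<le> d2' \<Longrightarrow> close_est \<pi> r mu B d1' d2' p rh"
  unfolding close_est_def by (meson order_trans)

lemma tt_ok: "tab_ok (rmax + \<epsilon>r) (true_table r mu)"
  using r_bd eps_pos unfolding tab_ok_def true_table_def by (smt (verit))

lemma rh_ok: assumes ce: "close_est \<pi> r mu B dz dr p rh" and dr: "dr \<le> \<epsilon>r" shows "tab_ok (rmax + \<epsilon>r) rh"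
  unfolding tab_ok_def
proof (intro allI ballI)
  fix k b n assume b: "b \<in> B k"
  have "\<bar>rh k b n - r k n (mu k b n)\<bar> \<le> dr" using ce b by (simp add: close_est_def)
  moreover have "0 \<le> r k n (mu k b n)" "r k n (mu k b n) \<le> rmax" using r_bd by auto
  ultimately show "\<bar>rh k b n\<bar> \<le> rmax + \<epsilon>r" using dr by linarith
qed

lemma rh_close: "close_est \<pi> r mu B dz dr p rh \<Longrightarrow>
   \<forall>k. \<forall>b\<in>B k. \<forall>n. \<bar>true_table r mu k b n - rh k b n\<bar> \<le> dr"
  unfolding close_est_def true_table_def by (simp add: abs_minus_commute)

lemma rh_close': "close_est \<pi> r mu B dz dr p rh \<Longrightarrow>
   \<forall>k. \<forall>b\<in>B k. \<forall>n. \<bar>rh k b n - true_table r mu k b n\<bar> \<le> dr"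
  unfolding close_est_def true_table_def by simp

lemma main:
  shows "\<exists>\<eta>. 0 < \<eta> \<and> \<eta> \<le> \<eta>0 \<and>
    (\<forall>V \<rho> pih rh \<delta>z \<delta>r a_star a_tilde a_hat.
      V \<ge> 1 \<longrightarrow>
      polyhedral (dual_fun V U rmax c (true_table r mu) mu A e B \<pi>) \<rho> \<longrightarrow>
      (\<forall>pih' rh' \<rho>'. prob_vec pih' \<and> close_est \<pi> r mu B \<epsilon>z \<epsilon>r pih' rh' \<longrightarrow>
          polyhedral (dual_fun V U rmax c (true_table r mu) mu A e B \<pi>) \<rho>' \<longrightarrow>
          polyhedral (dual_fun V U rmax c rh' mu A e B pih') \<rho>') \<longrightarrow>
      prob_vec pih \<longrightarrow>
      0 \<le> \<delta>z \<longrightarrow> \<delta>z \<le> \<epsilon>z \<longrightarrow> 0 \<le> \<delta>r \<longrightarrow> \<delta>r \<le> \<epsilon>r \<longrightarrow>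
      close_est \<pi> r mu B \<delta>z \<delta>r pih rh \<longrightarrow>
      is_dual_min (dual_fun V U rmax c (true_table r mu) mu A e B \<pi>) a_star \<longrightarrow>
      is_dual_min (dual_fun V U rmax c rh mu A e B \<pi>) a_tilde \<longrightarrow>
      is_dual_min (dual_fun V U rmax c rh mu A e B pih) a_hat \<longrightarrow>
      (let fmax = real CARD('n) * \<beta> * rmax + cmax;
           theta = real CARD('k) * (1 + rmax + Amax + mumax + real CARD('n) * bmax + hmax) / \<eta>
       in norm (a_hat - a_tilde) \<le> 2 * \<delta>z * V * fmax * theta / \<rho>
        \<and> norm (a_star - a_tilde) \<le> 2 * V * fmax * \<delta>r / (\<rho> * \<eta>)))"
proof -
  define C1 where "C1 = rmax + \<epsilon>r"
  define S where "S = {\<rho>. polyhedral (dual_fun 1 U rmax c (true_table r mu) mu A e B \<pi>) \<rho>}"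
  define \<rho>1 where "\<rho>1 = Sup S / 2"
  define L1 where "L1 = Lc C1"
  define N where "N = real CARD('n)"
  define \<eta> where "\<eta> = (if S = {} then \<eta>0 else min \<eta>0 (min (1/(2*(1 + L1/\<rho>1))) (\<rho>1/(2*N))))"
  have ttok: "tab_ok C1 (true_table r mu)" using tt_ok by (simp add: C1_def)
  have L1: "0 \<le> L1" unfolding L1_def by (rule Lc_nn[OF ttok])
  have N: "0 < N" unfolding N_def by simp
  have S_bd: "\<rho> \<le> C1 + rmax" if "\<rho> \<in> S" for \<rho>
    using G_rho_bd[OF ttok zero_le_one pi_prob] that unfolding S_def by simp
  have S_pos: "0 < \<rho>" if "\<rho> \<in> S" for \<rho>
    using that unfolding S_def polyhedral_def by simp
  have hS: "0 < \<rho>1 \<and> \<rho>1 \<in> S \<and> (\<forall>\<rho>\<in>S. \<rho> \<le> 2*\<rho>1)" if ne: "S \<noteq> {}"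
  proof -
    have bdd: "bdd_above S" by (rule bdd_aboveI[where M="C1 + rmax"]) (rule S_bd)
    obtain \<rho>0 where r0: "\<rho>0 \<in> S" using ne by blast
    have "\<rho>0 \<le> Sup S" by (rule cSup_upper[OF r0 bdd])
    hence sp: "0 < Sup S" using S_pos[OF r0] by linarith
    hence "\<rho>1 < Sup S" unfolding \<rho>1_def by simp
    then obtain \<rho>' where r': "\<rho>' \<in> S" "\<rho>1 < \<rho>'" using less_cSup_iff[OF ne bdd] by blast
    have p1: "0 < \<rho>1" using sp unfolding \<rho>1_def by simp
    have "\<rho>1 \<in> S" using poly_mono[of _ \<rho>' \<rho>1] r' p1 unfolding S_def by auto
    moreover have "\<forall>\<rho>\<in>S. \<rho> \<le> 2*\<rho>1" using cSup_upper[OF _ bdd] unfolding \<rho>1_def by auto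
    ultimately show ?thesis using p1 by blast
  qed
  have et: "0 < \<eta> \<and> \<eta> \<le> \<eta>0"
  proof (cases "S = {}")
    case True thus ?thesis using eps_pos by (simp add: \<eta>_def)
  next
    case False
    hence p1: "0 < \<rho>1" using hS by blast
    hence "0 < 1 + L1/\<rho>1" using L1 by (smt (verit) divide_nonneg_pos)
    thus ?thesis using False eps_pos p1 N by (simp add: \<eta>_def)
  qed
  show ?thesis
  proof (intro exI[of _ \<eta>] conjI allI impI)
    show "0 < \<eta>" "\<eta> \<le> \<eta>0" using et by auto
  next
    fix V \<rho> pih rh \<delta>z \<delta>r a_star a_tilde a_hat
    assume V1: "1 \<le> V"
      and Pg: "polyhedral (dual_fun V U rmax c (true_table r mu) mu A e B \<pi>) \<rho>"
      and A2: "\<forall>pih' rh' \<rho>'. prob_vec pih' \<and> close_est \<pi> r mu B \<epsilon>z \<epsilon>r pih' rh' \<longrightarrow>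
          polyhedral (dual_fun V U rmax c (true_table r mu) mu A e B \<pi>) \<rho>' \<longrightarrow>
          polyhedral (dual_fun V U rmax c rh' mu A e B pih') \<rho>'"
      and pp: "prob_vec pih" and dz0: "0 \<le> \<delta>z" and dz1: "\<delta>z \<le> \<epsilon>z" and dr0: "0 \<le> \<delta>r" and dr1: "\<delta>r \<le> \<epsilon>r"
      and ce: "close_est \<pi> r mu B \<delta>z \<delta>r pih rh"
      and m1: "is_dual_min (dual_fun V U rmax c (true_table r mu) mu A e B \<pi>) a_star"
      and m2: "is_dual_min (dual_fun V U rmax c rh mu A e B \<pi>) a_tilde"
      and m3: "is_dual_min (dual_fun V U rmax c rh mu A e B pih) a_hat"
    have V0: "0 < V" using V1 by simp
    have "\<rho> \<in> S" using Pg poly_V[OF ttok V0] unfolding S_def by simp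
    hence Sne: "S \<noteq> {}" by blast
    from hS[OF Sne] have r1: "0 < \<rho>1" and r1S: "\<rho>1 \<in> S" and rr: "\<rho> \<le> 2*\<rho>1" using \<open>\<rho> \<in> S\<close> by auto
    have r0: "0 < \<rho>" using S_pos \<open>\<rho> \<in> S\<close> by simp
    have eta: "\<eta> = min \<eta>0 (min (1/(2*(1 + L1/\<rho>1))) (\<rho>1/(2*N)))" using Sne by (simp add: \<eta>_def)
    have P1: "polyhedral (dual_fun V U rmax c (true_table r mu) mu A e B \<pi>) \<rho>1"
      using r1S poly_V[OF ttok V0] unfolding S_def by simp
    have rhok: "tab_ok C1 rh" using rh_ok[OF ce dr1] by (simp add: C1_def)
    have ceps: "close_est \<pi> r mu B \<epsilon>z \<epsilon>r pih rh" by (rule ce_mono[OF ce dz1 dr1])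
    have cpi: "close_est \<pi> r mu B \<epsilon>z \<epsilon>r \<pi> rh"
      using ceps eps_pos unfolding close_est_def by simp
    have Ph: "polyhedral (dual_fun V U rmax c rh mu A e B pih) \<rho>1" using A2 pp ceps P1 by blast
    have Pt: "polyhedral (dual_fun V U rmax c rh mu A e B \<pi>) \<rho>1" using A2 pi_prob cpi P1 by blast
    define K0 where "K0 = Uc + cmax"
    define fmax where "fmax = real CARD('n) * \<beta> * rmax + cmax"
    have K0f: "K0 \<le> fmax" using Uc_le unfolding K0_def fmax_def by simp
    have n1: "\<rho>1 * norm a_star \<le> V*K0" unfolding K0_def by (rule min_norm[OF ttok _ pi_prob P1 m1]) (use V0 in simp)
    have n2: "\<rho>1 * norm a_tilde \<le> V*K0" unfolding K0_def by (rule min_norm[OF rhok _ pi_prob Pt m2]) (use V0 in simp)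
    have n3: "\<rho>1 * norm a_hat \<le> V*K0" unfolding K0_def by (rule min_norm[OF rhok _ pp Ph m3]) (use V0 in simp)
    have fs: "a_star \<in> dual_feasible" "a_tilde \<in> dual_feasible" "a_hat \<in> dual_feasible"
      using m1 m2 m3 by (auto simp: is_dual_min_def)
    have part2: "norm (a_star - a_tilde) \<le> 2 * V * fmax * \<delta>r / (\<rho> * \<eta>)"
    proof -
      let ?g = "dual_fun V U rmax c (true_table r mu) mu A e B \<pi>"
      let ?gt = "dual_fun V U rmax c rh mu A e B \<pi>"
      have q1: "?g a_star \<le> ?g a_tilde - \<rho>1 * norm (a_star - a_tilde)" by (rule poly_unique[OF P1 m1 fs(2)])
      have q2: "?gt a_tilde \<le> ?gt a_star" using m2 fs(1) by (simp add: is_dual_min_def)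
      have q3: "?g a_tilde \<le> ?gt a_tilde + \<delta>r * (N * norm a_tilde)"
        unfolding N_def by (rule G_pert[OF ttok rhok rh_close[OF ce]]) (use V0 pi_prob in auto)
      have q4: "?gt a_star \<le> ?g a_star + \<delta>r * (N * norm a_star)"
        unfolding N_def by (rule G_pert[OF rhok ttok rh_close'[OF ce]]) (use V0 pi_prob in auto)
      have "\<rho>1 * norm (a_star - a_tilde) \<le> \<delta>r * N * (norm a_tilde + norm a_star)"
        using q1 q2 q3 q4 by (simp add: algebra_simps)
      thus ?thesis
        by (rule fin2[OF _ n2 n1 r1 r0 rr dr0 N]) (use et eta K0f V0 in \<open>auto intro: mult_left_mono\<close>)
    qed
    have part1: "norm (a_hat - a_tilde) \<le> 2 * \<delta>z * V * fmax *
         (real CARD('k) * (1 + rmax + Amax + mumax + real CARD('n) * bmax + hmax) / \<eta>) / \<rho>"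
    proof -
      let ?gh = "dual_fun V U rmax c rh mu A e B pih"
      let ?gt = "dual_fun V U rmax c rh mu A e B \<pi>"
      let ?gk = "\<lambda>k \<alpha>. gk V U rmax (c k) (rh k) (mu k) (A k) (e k) (B k) \<alpha>"
      have q1: "?gh a_hat \<le> ?gh a_tilde - \<rho>1 * norm (a_hat - a_tilde)" by (rule poly_unique[OF Ph m3 fs(2)])
      have q2: "?gt a_tilde \<le> ?gt a_hat" using m2 fs(3) by (simp add: is_dual_min_def)
      have "\<rho>1 * norm (a_hat - a_tilde) \<le> (?gh a_tilde - ?gt a_tilde) - (?gh a_hat - ?gt a_hat)"
        using q1 q2 by linarith
      also have "\<dots> = (\<Sum>k\<in>UNIV. (pih k - \<pi> k) * (?gk k a_tilde - ?gk k a_hat))"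
        unfolding G_weights by (simp add: sum_subtractf[symmetric] right_diff_distrib)
      also have "\<dots> \<le> (\<Sum>k\<in>(UNIV::'k set). \<delta>z * (2*(V*K0) + L1*(norm a_tilde + norm a_hat)))"
      proof (rule sum_mono)
        fix k
        have b1: "\<bar>?gk k a_tilde\<bar> \<le> V*K0 + L1 * norm a_tilde"
          unfolding K0_def L1_def by (rule gk_bd[OF rhok]) (use V0 in simp)
        have b2: "\<bar>?gk k a_hat\<bar> \<le> V*K0 + L1 * norm a_hat"
          unfolding K0_def L1_def by (rule gk_bd[OF rhok]) (use V0 in simp)
        have pk: "\<bar>pih k - \<pi> k\<bar> \<le> \<delta>z" using ce by (simp add: close_est_def)
        have "(pih k - \<pi> k) * (?gk k a_tilde - ?gk k a_hat) \<le> \<bar>pih k - \<pi> k\<bar> * \<bar>?gk k a_tilde - ?gk k a_hat\<bar>"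
          by (simp add: abs_mult[symmetric])
        also have "\<dots> \<le> \<delta>z * (2*(V*K0) + L1*(norm a_tilde + norm a_hat))"
          by (rule mult_mono[OF pk]) (use b1 b2 dz0 in \<open>auto simp: algebra_simps\<close>)
        finally show "(pih k - \<pi> k) * (?gk k a_tilde - ?gk k a_hat) \<le> \<delta>z * (2*(V*K0) + L1*(norm a_tilde + norm a_hat))" .
      qed
      also have "\<dots> = real CARD('k) * \<delta>z * (2*(V*K0) + L1*(norm a_tilde + norm a_hat))" by simp
      finally have "\<rho>1 * norm (a_hat - a_tilde) \<le> real CARD('k) * \<delta>z * (2*(V*K0) + L1*(norm a_tilde + norm a_hat))" .
      thus ?thesis
        by (rule fin1[OF _ n2 n3 r1 r0 rr dz0 _ L1])
           (use et eta K0f V0 rmax_nn Amax_nn mumax_nn bmax_nn hmax_nn in \<open>auto intro: mult_left_mono\<close>)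
    qed
    show "let fmax = real CARD('n) * \<beta> * rmax + cmax;
           theta = real CARD('k) * (1 + rmax + Amax + mumax + real CARD('n) * bmax + hmax) / \<eta>
       in norm (a_hat - a_tilde) \<le> 2 * \<delta>z * V * fmax * theta / \<rho>
        \<and> norm (a_star - a_tilde) \<le> 2 * V * fmax * \<delta>r / (\<rho> * \<eta>)"
      unfolding Let_def using part1 part2 unfolding fmax_def by simp
  qed
qed

end


theorem lemma3:
  fixes \<pi> :: "'k::finite \<Rightarrow> real"
    and A :: "'k \<Rightarrow> real^'n::finite" and e :: "'k \<Rightarrow> real^'m::finite"
    and B :: "'k \<Rightarrow> ('n,'m) alloc set"
    and mu :: "'k \<Rightarrow> ('n,'m) alloc \<Rightarrow> 'n \<Rightarrow> real"
    and c :: "'k \<Rightarrow> ('n,'m) alloc \<Rightarrow> real"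
    and r :: "'k \<Rightarrow> 'n \<Rightarrow> real \<Rightarrow> real"
    and U U' :: "'n \<Rightarrow> real \<Rightarrow> real"
    and Amax hmax bmax mumax cmax rmax \<beta> \<epsilon>z \<epsilon>r \<eta>0 :: real
  assumes pi_prob: "prob_vec \<pi>"
    and A_bd: "\<forall>k n. 0 \<le> A k $ n \<and> A k $ n \<le> Amax"
    and e_bd: "\<forall>k m. 0 \<le> e k $ m \<and> e k $ m \<le> hmax"
    and B_fin: "\<forall>k. finite (B k)"
    and B_nonneg: "\<forall>k. \<forall>b\<in>B k. \<forall>m n. 0 \<le> b $ m $ n"
    and bmax_def: "bmax = Max {b $ m $ n | k b m n. b \<in> B k}"
    and mu_bd: "\<forall>k. \<forall>b\<in>B k. \<forall>n. 0 \<le> mu k b n \<and> mu k b n \<le> mumax"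
    and c_bd: "\<forall>k. \<forall>b\<in>B k. 0 \<le> c k b \<and> c k b \<le> cmax"
    and r_bd: "\<forall>k n x. 0 \<le> r k n x \<and> r k n x \<le> rmax"
    and U_incr: "\<forall>n. strict_mono_on {0..} (U n)"
    and U_conc: "\<forall>n. concave_on {0..} (U n)"
    and U_0: "\<forall>n. U n 0 = 0"
    and U_deriv: "\<forall>n. \<forall>x\<ge>0. (U n has_real_derivative U' n x) (at x within {0..})"
    and beta_def: "\<beta> = Sup {U' n x | n x. 0 \<le> x}"
    and ass1: "assumption1 \<pi> A e B mu r rmax \<epsilon>z \<epsilon>r \<eta>0"
  shows "\<exists>\<eta>. 0 < \<eta> \<and> \<eta> \<le> \<eta>0 \<and>
    (\<forall>V \<rho> pih rh \<delta>z \<delta>r a_star a_tilde a_hat.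
      V \<ge> 1 \<longrightarrow>
      polyhedral (dual_fun V U rmax c (true_table r mu) mu A e B \<pi>) \<rho> \<longrightarrow>
      (\<forall>pih' rh' \<rho>'. prob_vec pih' \<and> close_est \<pi> r mu B \<epsilon>z \<epsilon>r pih' rh' \<longrightarrow>
          polyhedral (dual_fun V U rmax c (true_table r mu) mu A e B \<pi>) \<rho>' \<longrightarrow>
          polyhedral (dual_fun V U rmax c rh' mu A e B pih') \<rho>') \<longrightarrow>
      prob_vec pih \<longrightarrow>
      0 \<le> \<delta>z \<longrightarrow> \<delta>z \<le> \<epsilon>z \<longrightarrow> 0 \<le> \<delta>r \<longrightarrow> \<delta>r \<le> \<epsilon>r \<longrightarrow>
      close_est \<pi> r mu B \<delta>z \<delta>r pih rh \<longrightarrow>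
      is_dual_min (dual_fun V U rmax c (true_table r mu) mu A e B \<pi>) a_star \<longrightarrow>
      is_dual_min (dual_fun V U rmax c rh mu A e B \<pi>) a_tilde \<longrightarrow>
      is_dual_min (dual_fun V U rmax c rh mu A e B pih) a_hat \<longrightarrow>
      (let fmax = real CARD('n) * \<beta> * rmax + cmax;
           theta = real CARD('k) * (1 + rmax + Amax + mumax + real CARD('n) * bmax + hmax) / \<eta>
       in norm (a_hat - a_tilde) \<le> 2 * \<delta>z * V * fmax * theta / \<rho>
        \<and> norm (a_star - a_tilde) \<le> 2 * V * fmax * \<delta>r / (\<rho> * \<eta>)))"
  proof -
  interpret sys \<pi> A e B mu c r U U' Amax hmax bmax mumax cmax rmax \<beta> \<epsilon>z \<epsilon>r \<eta>0
    unfolding sys_def using assms by blast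
  show ?thesis by (rule main)
qed

end
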